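(* Let $x=[x_1,\dots,x_N]\in S_N$ and let $(x_p,x_q,x_r)$, $p<q<r$, be a minimally chosen $[231]$-pattern in $x$. Let $x'$ be the permutation obtained from $x$ by exchanging the entries in positions $p$ and $q$, i.e. $x'=[x_1,\dots,x_{p-1},x_q,x_{p+1},\dots,x_{q-1},x_p,x_{q+1},\dots,x_N]$. Then $\phi(\pi_{x'})=\phi(\pi_x)$, and $(x'_p,x'_q,x'_r)$ is a left-minimal $[321]$-pattern in $x'$.
   Context: Permutations are in one-line notation and composed as functions. $H_0(S_N)$ is generated by $\pi_1,\dots,\pi_{N-1}$ with $\pi_i^2=\pi_i$, $\pi_i\pi_j=\pi_j\pi_i$ for $|i-j|\ge2$, $\pi_i\pi_{i+1}\pi_i=\pi_{i+1}\pi_i\pi_{i+1}$; $\pi_w=\pi_{i_1}\cdots\pi_{i_k}$ for a reduced word $w=s_{i_1}\cdots s_{i_k}$. $\phi$ is the quotient morphism from $H_0(S_N)$ to its quotient by the relations $\pi_i\pi_{i+1}\pi_i=\pi_i\pi_{i+1}$ ($1\le i\le N-2$), sending $\pi_i\mapsto\pi_i$ (this quotient is isomorphic to $\operatorname{NDPF}_N$). A $[231]$-pattern is a triple of positions $p<q<r$ with $x_r<x_p<x_q$; its width is $(r-p,q-p)$, and it is minimally chosen if its width is lexicographically minimal among all $[231]$-patterns of $x$. A $[321]$-pattern $(x_p,x_q,x_r)$ ($p<q<r$, $x_p>x_q>x_r$) is left minimal if $x_t<x_r$ for all $t$ with $p<t<q$ and $x_s>x_q$ for all $s$ with $q<s<r$.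 *)

theory Defs
  imports "HOL-Combinatorics.Combinatorics"
begin

text \<open>Permutations of {1..N} are functions x :: nat => nat with x permutes {1..N};
  one-line notation [x 1, ..., x N]. The simple transposition s_i swaps i and i+1.\<close>

definition simple_transp :: "nat \<Rightarrow> nat \<Rightarrow> nat" where
  "simple_transp i = Transposition.transpose i (Suc i)"

definition word_perm :: "nat list \<Rightarrow> (nat \<Rightarrow> nat)" where
  "word_perm w = foldr (\<lambda>i f. simple_transp i \<circ> f) w id"

definition valid_word :: "nat \<Rightarrow> nat list \<Rightarrow> bool" where
  "valid_word N w \<longleftrightarrow> (\<forall>i\<in>set w. 1 \<le> i \<and> i \<le> N - 1)"

definition reduced_word :: "nat \<Rightarrow> (nat \<Rightarrow> nat) \<Rightarrow> nat list \<Rightarrow> bool" where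
  "reduced_word N x w \<longleftrightarrow> valid_word N w \<and> word_perm w = x \<and>
     (\<forall>w'. valid_word N w' \<and> word_perm w' = x \<longrightarrow> length w \<le> length w')"

text \<open>Defining relations of H_0(S_N) together with the extra NDPF relations
  pi_i pi_(i+1) pi_i = pi_i pi_(i+1), as relations between words over {1..N-1}.\<close>
inductive ndpf_rel :: "nat \<Rightarrow> nat list \<Rightarrow> nat list \<Rightarrow> bool" for N where
  idem: "1 \<le> i \<Longrightarrow> i \<le> N - 1 \<Longrightarrow> ndpf_rel N [i, i] [i]"
| comm: "1 \<le> i \<Longrightarrow> i \<le> N - 1 \<Longrightarrow> 1 \<le> j \<Longrightarrow> j \<le> N - 1 \<Longrightarrow>
           i + 2 \<le> j \<or> j + 2 \<le> i \<Longrightarrow> ndpf_rel N [i, j] [j, i]"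
| braid: "1 \<le> i \<Longrightarrow> i + 1 \<le> N - 1 \<Longrightarrow> ndpf_rel N [i, Suc i, i] [Suc i, i, Suc i]"
| ndpf: "1 \<le> i \<Longrightarrow> i \<le> N - 2 \<Longrightarrow> ndpf_rel N [i, Suc i, i] [i, Suc i]"

definition ndpf_step :: "nat \<Rightarrow> nat list \<Rightarrow> nat list \<Rightarrow> bool" where
  "ndpf_step N u v \<longleftrightarrow> (\<exists>a b l r. u = a @ l @ b \<and> v = a @ r @ b \<and> ndpf_rel N l r)"

text \<open>Two words represent the same element of the quotient H_0(S_N)/(extra relations)
  (i.e. NDPF_N) iff they are related by the generated monoid congruence.\<close>
definition ndpf_eq :: "nat \<Rightarrow> nat list \<Rightarrow> nat list \<Rightarrow> bool" where
  "ndpf_eq N = equivclp (ndpf_step N)"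

text \<open>phi(pi_x) = phi(pi_y): the images of reduced words of x and y coincide.\<close>
definition phi_pi_eq :: "nat \<Rightarrow> (nat \<Rightarrow> nat) \<Rightarrow> (nat \<Rightarrow> nat) \<Rightarrow> bool" where
  "phi_pi_eq N x y \<longleftrightarrow> (\<forall>w w'. reduced_word N x w \<and> reduced_word N y w' \<longrightarrow> ndpf_eq N w w')"

definition is_231 :: "nat \<Rightarrow> (nat \<Rightarrow> nat) \<Rightarrow> nat \<Rightarrow> nat \<Rightarrow> nat \<Rightarrow> bool" where
  "is_231 N x p q r \<longleftrightarrow> 1 \<le> p \<and> p < q \<and> q < r \<and> r \<le> N \<and> x r < x p \<and> x p < x q"

definition min_231 :: "nat \<Rightarrow> (nat \<Rightarrow> nat) \<Rightarrow> nat \<Rightarrow> nat \<Rightarrow> nat \<Rightarrow> bool" where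
  "min_231 N x p q r \<longleftrightarrow> is_231 N x p q r \<and>
     (\<forall>p' q' r'. is_231 N x p' q' r' \<longrightarrow>
        r - p < r' - p' \<or> (r - p = r' - p' \<and> q - p \<le> q' - p'))"

definition left_min_321 :: "nat \<Rightarrow> (nat \<Rightarrow> nat) \<Rightarrow> nat \<Rightarrow> nat \<Rightarrow> nat \<Rightarrow> bool" where
  "left_min_321 N x p q r \<longleftrightarrow> 1 \<le> p \<and> p < q \<and> q < r \<and> r \<le> N \<and>
     x p > x q \<and> x q > x r \<and>
     (\<forall>t. p < t \<and> t < q \<longrightarrow> x t < x r) \<and>
     (\<forall>s. q < s \<and> s < r \<longrightarrow> x s > x q)"

end

theory Submission
  imports Defs
begin


lemma st_apply: "simple_transp i t = (if t = i then Suc i else if t = Suc i then i else t)"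
  by (simp add: simple_transp_def Transposition.transpose_def)

lemma st_invol[simp]: "simple_transp i \<circ> simple_transp i = id"
  by (simp add: simple_transp_def)

lemma st_invol2[simp]: "simple_transp i (simple_transp i t) = t"
  by (simp add: simple_transp_def)

lemma st_invol3[simp]: "simple_transp i \<circ> (simple_transp i \<circ> f) = f"
  by (simp add: fun_eq_iff)

lemma st_invol'[simp]: "y \<circ> simple_transp i \<circ> simple_transp i = y"
  by (simp add: comp_assoc)

lemma wp_Nil[simp]: "word_perm [] = id" by (simp add: word_perm_def)
lemma wp_Cons[simp]: "word_perm (i # w) = simple_transp i \<circ> word_perm w" by (simp add: word_perm_def)
lemma wp_append[simp]: "word_perm (a @ b) = word_perm a \<circ> word_perm b"
  by (induction a) (auto simp: comp_assoc)

lemma wp_rev_inv_pt: "word_perm (rev w) (word_perm w t) = t"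
  by (induction w arbitrary: t) auto

lemma wp_rev_inv: "word_perm (rev w) \<circ> word_perm w = id"
  by (simp add: fun_eq_iff wp_rev_inv_pt)

lemma valid_append[simp]: "valid_word N (a @ b) \<longleftrightarrow> valid_word N a \<and> valid_word N b"
  by (auto simp: valid_word_def)
lemma valid_Cons[simp]: "valid_word N (i # b) \<longleftrightarrow> 1 \<le> i \<and> i \<le> N - 1 \<and> valid_word N b"
  by (auto simp: valid_word_def)
lemma valid_Nil[simp]: "valid_word N []" by (simp add: valid_word_def)

lemma st_permutes: "1 \<le> i \<Longrightarrow> i \<le> N - 1 \<Longrightarrow> simple_transp i permutes {1..N}"
  unfolding simple_transp_def by (rule permutes_swap_id) auto

lemma wp_permutes: "valid_word N w \<Longrightarrow> word_perm w permutes {1..N}"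
proof (induction w)
  case (Cons i w)
  then have "simple_transp i permutes {1..N}" by (intro st_permutes) auto
  from permutes_compose[OF Cons.IH this] Cons.prems show ?case by (simp only: wp_Cons valid_Cons)
qed simp

definition invs :: "nat \<Rightarrow> (nat \<Rightarrow> nat) \<Rightarrow> (nat \<times> nat) set" where
  "invs N y = {(a,b). a \<in> {1..N} \<and> b \<in> {1..N} \<and> a < b \<and> y b < y a}"

definition ninv :: "nat \<Rightarrow> (nat \<Rightarrow> nat) \<Rightarrow> nat" where
  "ninv N y = card (invs N y)"

lemma invs_finite: "finite (invs N y)"
  by (rule finite_subset[of _ "{1..N} \<times> {1..N}"]) (auto simp: invs_def)

lemma ninv_id: "ninv N id = 0"
proof -
  have "invs N id = {}" by (auto simp: invs_def)
  then show ?thesis by (simp add: ninv_def)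
qed

lemma ninv_id'[simp]: "ninv N (\<lambda>a. a) = 0"
  using ninv_id unfolding id_def .

lemma ninv_up:
  assumes "1 \<le> k" "k < N" "y k < y (Suc k)"
  shows "ninv N (y \<circ> simple_transp k) = Suc (ninv N y)"
proof -
  let ?s = "simple_transp k"
  let ?g = "map_prod ?s ?s"
  have inj: "inj ?g" unfolding inj_def by (auto simp: st_apply split: if_splits)
  have eq: "invs N (y \<circ> ?s) = insert (k, Suc k) (?g ` invs N y)"
  proof (rule set_eqI)
    fix z show "z \<in> invs N (y \<circ> ?s) \<longleftrightarrow> z \<in> insert (k, Suc k) (?g ` invs N y)"
    proof (cases z)
      case (Pair a b)
      have "(a,b) \<in> ?g ` invs N y \<longleftrightarrow> (?s a, ?s b) \<in> invs N y"
      proof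
        assume "(a,b) \<in> ?g ` invs N y"
        then obtain c d where "(c,d) \<in> invs N y" "a = ?s c" "b = ?s d" by auto
        then show "(?s a, ?s b) \<in> invs N y" by (simp add: simple_transp_def)
      next
        assume "(?s a, ?s b) \<in> invs N y"
        then have "?g (?s a, ?s b) \<in> ?g ` invs N y" by blast
        then show "(a,b) \<in> ?g ` invs N y" by (simp add: simple_transp_def)
      qed
      then show ?thesis using Pair assms
        by (auto simp: invs_def st_apply split: if_splits)
    qed
  qed
  have "(k, Suc k) \<notin> ?g ` invs N y"
  proof
    assume "(k, Suc k) \<in> ?g ` invs N y"
    then obtain c d where "(c,d) \<in> invs N y" "k = ?s c" "Suc k = ?s d" by auto
    then show False using assms by (auto simp: invs_def st_apply split: if_splits)
  qed
  then show ?thesis unfolding ninv_def eq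
    using invs_finite card_image[OF inj_on_subset[OF inj]] by simp
qed

lemma ninv_down:
  assumes "1 \<le> k" "k < N" "y (Suc k) < y k"
  shows "Suc (ninv N (y \<circ> simple_transp k)) = ninv N y"
proof -
  have "ninv N (y \<circ> simple_transp k \<circ> simple_transp k) = Suc (ninv N (y \<circ> simple_transp k))"
    by (rule ninv_up[of k N "y \<circ> simple_transp k"]) (use assms in \<open>auto simp: st_apply\<close>)
  then show ?thesis by simp
qed

lemma ninv_step_le:
  assumes "inj y" "1 \<le> k" "k < N"
  shows "ninv N (y \<circ> simple_transp k) \<le> Suc (ninv N y)"
proof -
  have "y k \<noteq> y (Suc k)" using assms(1) by (auto dest: injD)
  show ?thesis
  proof (cases "y k < y (Suc k)")
    case True then show ?thesis using ninv_up[OF assms(2,3)] by simp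
  next
    case False then have "y (Suc k) < y k" using \<open>y k \<noteq> y (Suc k)\<close> by simp
    then show ?thesis using ninv_down[OF assms(2,3), of y] by linarith
  qed
qed

lemma ninv_le_length: "valid_word N w \<Longrightarrow> ninv N (word_perm w) \<le> length w"
proof (induction w rule: rev_induct)
  case Nil then show ?case by (simp add: ninv_id)
next
  case (snoc i w)
  have v: "valid_word N w" "1 \<le> i" "i < N" using snoc.prems by auto
  have "inj (word_perm w)" using wp_permutes[OF v(1)] by (rule permutes_inj)
  then have "ninv N (word_perm w \<circ> simple_transp i) \<le> Suc (ninv N (word_perm w))"
    using ninv_step_le v by blast
  moreover have "word_perm (w @ [i]) = word_perm w \<circ> simple_transp i"
    by (simp only: wp_append wp_Cons wp_Nil comp_id)
  ultimately show ?case using snoc.IH[OF v(1)] v by (simp only: length_append_singleton)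
qed



lemma no_descent_id:
  assumes x: "x permutes {1..N}" and nd: "\<forall>k. 1 \<le> k \<and> k < N \<longrightarrow> x k < x (Suc k)"
  shows "x = id"
proof -
  have mono: "x a < x b" if "1 \<le> a" "a < b" "b \<le> N" for a b
    using that
  proof (induction b)
    case (Suc b)
    show ?case
    proof (cases "a = b")
      case True then show ?thesis using nd Suc.prems by auto
    next
      case False
      then have "x a < x b" using Suc by auto
      also have "x b < x (Suc b)" using nd Suc.prems False by auto
      finally show ?thesis .
    qed
  qed simp
  have inS: "x a \<in> {1..N} \<longleftrightarrow> a \<in> {1..N}" for a by (rule permutes_in_image[OF x])
  have "x a = a" for a
  proof (induction a rule: less_induct)
    case (less a)
    show ?case
    proof (cases "a \<in> {1..N}")
      case False then show ?thesis by (rule permutes_not_in[OF x])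
    next
      case True
      have ge: "a \<le> x a"
      proof (rule ccontr)
        assume "\<not> a \<le> x a"
        then have "x (x a) = x a" using less by auto
        then have "x a = a" using permutes_inj[OF x] by (auto dest: injD)
        then show False using \<open>\<not> a \<le> x a\<close> by simp
      qed
      obtain b where b: "x b = a" using permutes_surj[OF x] by (metis surjD)
      have bS: "b \<in> {1..N}" using inS[of b] b True by simp
      have "b = a"
      proof (rule ccontr)
        assume "b \<noteq> a"
        then consider "b < a" | "a < b" by linarith
        then show False
        proof cases
          case 1 then have "x b = b" using less by auto
          then show False using b \<open>b \<noteq> a\<close> by simp
        next
          case 2 then have "x a < x b" using mono True bS by auto
          then show False using b ge by simp
        qed
      qed
      then show ?thesis using b by simp
    qed
  qed
  then show ?thesis by (simp add: fun_eq_iff)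
qed

lemma exists_reduced:
  "x permutes {1..N} \<Longrightarrow> ninv N x = n \<Longrightarrow>
    \<exists>c. valid_word N c \<and> word_perm c = x \<and> length c = n"
proof (induction n arbitrary: x)
  case 0
  have "x = id"
  proof (rule no_descent_id[OF 0(1)], intro allI impI)
    fix k assume k: "1 \<le> k \<and> k < N"
    have "x k \<noteq> x (Suc k)" using permutes_inj[OF 0(1)] by (auto dest: injD)
    moreover have "\<not> x (Suc k) < x k"
    proof
      assume "x (Suc k) < x k"
      from ninv_down[of k N x, OF _ _ this] k 0(2) show False by simp
    qed
    ultimately show "x k < x (Suc k)" by simp
  qed
  then show ?case by (intro exI[of _ "[]"]) simp
next
  case (Suc n)
  have "x \<noteq> id" using Suc.prems ninv_id by auto
  then obtain k where k: "1 \<le> k" "k < N" "\<not> x k < x (Suc k)"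
    using no_descent_id[OF Suc.prems(1)] by blast
  have "x k \<noteq> x (Suc k)" using permutes_inj[OF Suc.prems(1)] by (auto dest: injD)
  then have d: "x (Suc k) < x k" using k by simp
  have yp: "x \<circ> simple_transp k permutes {1..N}"
    by (rule permutes_compose[OF st_permutes Suc.prems(1)]) (use k in auto)
  have "ninv N (x \<circ> simple_transp k) = n" using ninv_down[OF k(1,2) d] Suc.prems by simp
  from Suc.IH[OF yp this] obtain c where c: "valid_word N c" "word_perm c = x \<circ> simple_transp k" "length c = n"
    by blast
  show ?case
    by (rule exI[of _ "c @ [k]"]) (use c k in \<open>simp add: comp_assoc\<close>)
qed

definition rw :: "nat \<Rightarrow> (nat \<Rightarrow> nat) \<Rightarrow> nat list \<Rightarrow> bool" where
  "rw N x w \<longleftrightarrow> valid_word N w \<and> word_perm w = x \<and> length w = ninv N x"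

lemma reduced_iff:
  assumes "x permutes {1..N}"
  shows "reduced_word N x w \<longleftrightarrow> rw N x w"
proof
  assume r: "reduced_word N x w"
  obtain c where c: "valid_word N c" "word_perm c = x" "length c = ninv N x"
    using exists_reduced[OF assms] by blast
  have "length w \<le> length c" using r c unfolding reduced_word_def by blast
  moreover have "ninv N x \<le> length w" using ninv_le_length[of N w] r unfolding reduced_word_def by blast
  ultimately show "rw N x w" using r c unfolding reduced_word_def rw_def by simp
next
  assume r: "rw N x w"
  show "reduced_word N x w" unfolding reduced_word_def
    using r ninv_le_length unfolding rw_def by fastforce
qed

lemma rw_snoc:
  assumes "rw N x (a @ [i])"
  shows "1 \<le> i \<and> i < N \<and> x (Suc i) < x i \<and> rw N (x \<circ> simple_transp i) a"
proof -
  have v: "valid_word N a" "1 \<le> i" "i < N" using assms unfolding rw_def by auto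
  have xw: "x = word_perm a \<circ> simple_transp i" using assms unfolding rw_def by simp
  then have wa: "word_perm a = x \<circ> simple_transp i" by simp
  have len: "Suc (length a) = ninv N x" using assms unfolding rw_def by simp
  have inj: "inj x" using wp_permutes[of N "a @ [i]"] assms unfolding rw_def
    by (auto intro: permutes_inj)
  have le: "ninv N (x \<circ> simple_transp i) \<le> length a"
    using ninv_le_length[OF v(1)] wa by simp
  have "x i \<noteq> x (Suc i)" using inj by (auto dest: injD)
  moreover have "\<not> x i < x (Suc i)"
  proof
    assume "x i < x (Suc i)"
    from ninv_up[OF v(2,3) this] le len show False by simp
  qed
  ultimately have d: "x (Suc i) < x i" by simp
  have "Suc (ninv N (x \<circ> simple_transp i)) = ninv N x" by (rule ninv_down[OF v(2,3) d])
  then show ?thesis using v d wa len unfolding rw_def by simp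
qed

lemma rw_snocI:
  assumes "1 \<le> k" "k < N" "x (Suc k) < x k" "rw N (x \<circ> simple_transp k) c"
  shows "rw N x (c @ [k])"
  using assms ninv_down[OF assms(1-3)] unfolding rw_def by (simp add: comp_assoc)

lemma ndpf_eq_ctx:
  assumes "ndpf_eq N u v"
  shows "ndpf_eq N (a @ u @ b) (a @ v @ b)"
  using assms unfolding ndpf_eq_def
proof (induction rule: equivclp_induct)
  case base then show ?case by simp
next
  case (step y z)
  have "ndpf_step N (a @ y @ b) (a @ z @ b) \<or> ndpf_step N (a @ z @ b) (a @ y @ b)"
    using step(2) unfolding ndpf_step_def
    by (elim disjE exE conjE) (metis append.assoc)+
  then show ?case using step(3) by (rule equivclp_into_equivclp[rotated])
qed

lemma ndpf_eq_app2: "ndpf_eq N u v \<Longrightarrow> ndpf_eq N (u @ b) (v @ b)"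
  using ndpf_eq_ctx[of N u v "[]" b] by simp

lemma ndpf_eq_rel: "ndpf_rel N l r \<Longrightarrow> ndpf_eq N (a @ l @ b) (a @ r @ b)"
  unfolding ndpf_eq_def ndpf_step_def by (rule r_into_equivclp) blast

lemma ndpf_eq_trans: "ndpf_eq N u v \<Longrightarrow> ndpf_eq N v w \<Longrightarrow> ndpf_eq N u w"
  unfolding ndpf_eq_def by (rule equivclp_trans)

lemma ndpf_eq_sym: "ndpf_eq N u v \<Longrightarrow> ndpf_eq N v u"
  unfolding ndpf_eq_def by (rule equivclp_sym)

lemma ndpf_eq_refl: "ndpf_eq N u u"
  unfolding ndpf_eq_def by simp

lemma st_comm: "i + 2 \<le> j \<Longrightarrow> simple_transp i \<circ> simple_transp j = simple_transp j \<circ> simple_transp i"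
  by (auto simp: fun_eq_iff st_apply)

lemma st_braid: "simple_transp i \<circ> simple_transp (Suc i) \<circ> simple_transp i
   = simple_transp (Suc i) \<circ> simple_transp i \<circ> simple_transp (Suc i)"
  by (auto simp: fun_eq_iff st_apply)



declare ndpf_eq_trans[trans]

lemma rw_permutes: "rw N x w \<Longrightarrow> x permutes {1..N}"
  unfolding rw_def using wp_permutes by blast

lemma rw_len: "rw N x w \<Longrightarrow> length w = ninv N x"
  unfolding rw_def by simp

lemma matsumoto:
  "rw N x w1 \<Longrightarrow> rw N x w2 \<Longrightarrow> ndpf_eq N w1 w2"
proof (induction "ninv N x" arbitrary: x w1 w2 rule: less_induct)
  case less
  note IH = less.hyps
  have key: "ndpf_eq N (a @ [i]) (b @ [j])"
    if ij: "i < j" and r1: "rw N x (a @ [i])" and r2: "rw N x (b @ [j])" for a b i j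
  proof -
    from rw_snoc[OF r1] have i: "1 \<le> i" "i < N" "x (Suc i) < x i" and ra: "rw N (x \<circ> simple_transp i) a"
      by auto
    from rw_snoc[OF r2] have j: "1 \<le> j" "j < N" "x (Suc j) < x j" and rb: "rw N (x \<circ> simple_transp j) b"
      by auto
    have xp: "x permutes {1..N}" using rw_permutes[OF r1] .
    have lti: "ninv N (x \<circ> simple_transp i) < ninv N x" using rw_len[OF r1] rw_len[OF ra] by simp
    have ltj: "ninv N (x \<circ> simple_transp j) < ninv N x" using rw_len[OF r2] rw_len[OF rb] by simp
    have pi: "x \<circ> simple_transp i permutes {1..N}" using rw_permutes[OF ra] .
    have pj: "x \<circ> simple_transp j permutes {1..N}" using rw_permutes[OF rb] .
    show ?thesis
    proof (cases "j = Suc i")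
      case False
      then have ij2: "i + 2 \<le> j" using ij by simp
      let ?y = "x \<circ> simple_transp i \<circ> simple_transp j"
      have yp: "?y permutes {1..N}"
        by (rule permutes_compose[OF st_permutes pi]) (use j in auto)
      obtain c where c: "valid_word N c" "word_perm c = ?y" "length c = ninv N ?y"
        using exists_reduced[OF yp] by blast
      then have rc: "rw N ?y c" unfolding rw_def by simp
      have d1: "(x \<circ> simple_transp i) (Suc j) < (x \<circ> simple_transp i) j"
        using j ij2 by (simp add: st_apply)
      have r1': "rw N (x \<circ> simple_transp i) (c @ [j])"
        by (rule rw_snocI[OF j(1,2) d1 rc])
      have e1: "ndpf_eq N a (c @ [j])" using IH[OF lti ra r1'] .
      have yeq: "?y = x \<circ> simple_transp j \<circ> simple_transp i"
        using st_comm[OF ij2] by (simp add: comp_assoc)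
      have rc': "rw N (x \<circ> simple_transp j \<circ> simple_transp i) c" using rc yeq by simp
      have d2: "(x \<circ> simple_transp j) (Suc i) < (x \<circ> simple_transp j) i"
        using i ij2 by (simp add: st_apply)
      have r2': "rw N (x \<circ> simple_transp j) (c @ [i])"
        by (rule rw_snocI[OF i(1,2) d2 rc'])
      have e2: "ndpf_eq N b (c @ [i])" using IH[OF ltj rb r2'] .
      have "ndpf_eq N (a @ [i]) (c @ [j] @ [i])" using ndpf_eq_app2[OF e1, of "[i]"] by simp
      also have "ndpf_eq N (c @ [j] @ [i]) (c @ [i] @ [j])"
        using ndpf_eq_rel[OF ndpf_rel.comm[of j N i], of c "[]"] i j ij2 by simp
      also have "ndpf_eq N (c @ [i] @ [j]) (b @ [j])"
        using ndpf_eq_sym[OF ndpf_eq_app2[OF e2, of "[j]"]] by simp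
      finally show ?thesis .
    next
      case True
      let ?s = simple_transp
      let ?y = "x \<circ> ?s i \<circ> ?s (Suc i) \<circ> ?s i"
      have pii: "x \<circ> ?s i \<circ> ?s (Suc i) permutes {1..N}"
        by (rule permutes_compose[OF st_permutes pi]) (use j True in auto)
      have yp: "?y permutes {1..N}"
        by (rule permutes_compose[OF st_permutes pii]) (use i in auto)
      obtain c where c: "valid_word N c" "word_perm c = ?y" "length c = ninv N ?y"
        using exists_reduced[OF yp] by blast
      then have rc: "rw N ?y c" unfolding rw_def by simp
      have dA: "(x \<circ> ?s i \<circ> ?s (Suc i)) (Suc i) < (x \<circ> ?s i \<circ> ?s (Suc i)) i"
        using j True by (simp add: st_apply)
      have rA: "rw N (x \<circ> ?s i \<circ> ?s (Suc i)) (c @ [i])"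
        by (rule rw_snocI[OF i(1,2) dA rc])
      have dB: "(x \<circ> ?s i) (Suc (Suc i)) < (x \<circ> ?s i) (Suc i)"
        using i j True by (simp add: st_apply)
      have rB: "rw N (x \<circ> ?s i) ((c @ [i]) @ [Suc i])"
        by (rule rw_snocI[OF _ _ dB rA]) (use j True in auto)
      have e1: "ndpf_eq N a ((c @ [i]) @ [Suc i])" using IH[OF lti ra rB] .
      have yeq: "?y = x \<circ> ?s (Suc i) \<circ> ?s i \<circ> ?s (Suc i)"
        using st_braid[of i] by (simp add: comp_assoc)
      have rc': "rw N (x \<circ> ?s (Suc i) \<circ> ?s i \<circ> ?s (Suc i)) c" using rc yeq by simp
      have dC: "(x \<circ> ?s (Suc i) \<circ> ?s i) (Suc (Suc i)) < (x \<circ> ?s (Suc i) \<circ> ?s i) (Suc i)"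
        using i j True by (simp add: st_apply)
      have rC: "rw N (x \<circ> ?s (Suc i) \<circ> ?s i) (c @ [Suc i])"
        by (rule rw_snocI[OF _ _ dC rc']) (use j True in auto)
      have dD: "(x \<circ> ?s (Suc i)) (Suc i) < (x \<circ> ?s (Suc i)) i"
        using i j True by (simp add: st_apply)
      have rD: "rw N (x \<circ> ?s (Suc i)) ((c @ [Suc i]) @ [i])"
        by (rule rw_snocI[OF i(1,2) dD rC])
      have e2: "ndpf_eq N b ((c @ [Suc i]) @ [i])" using IH[OF _ rb] rD ltj True by simp
      have "ndpf_eq N (a @ [i]) (c @ [i, Suc i, i] @ [])" using ndpf_eq_app2[OF e1, of "[i]"] by simp
      also have "ndpf_eq N (c @ [i, Suc i, i] @ []) (c @ [Suc i, i, Suc i] @ [])"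
        by (rule ndpf_eq_rel[OF ndpf_rel.braid]) (use i j True in auto)
      also have "ndpf_eq N (c @ [Suc i, i, Suc i] @ []) (b @ [j])"
        using ndpf_eq_sym[OF ndpf_eq_app2[OF e2, of "[Suc i]"]] True by simp
      finally show ?thesis .
    qed
  qed
  show ?case
  proof (cases w1 rule: rev_exhaust)
    case Nil
    then have "w2 = []" using rw_len[OF less.prems(1)] rw_len[OF less.prems(2)] by simp
    then show ?thesis using Nil ndpf_eq_refl by simp
  next
    case (snoc a i)
    then have "w2 \<noteq> []" using rw_len[OF less.prems(1)] rw_len[OF less.prems(2)] by auto
    then obtain b j where w2: "w2 = b @ [j]" by (metis rev_exhaust)
    have r1: "rw N x (a @ [i])" using less.prems(1) snoc by simp
    have r2: "rw N x (b @ [j])" using less.prems(2) w2 by simp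
    consider "i = j" | "i < j" | "j < i" by linarith
    then show ?thesis
    proof cases
      case 1
      from rw_snoc[OF r1] have ra: "rw N (x \<circ> simple_transp i) a" by auto
      from rw_snoc[OF r2] 1 have rb: "rw N (x \<circ> simple_transp i) b" by auto
      have lt: "ninv N (x \<circ> simple_transp i) < ninv N x" using rw_len[OF r1] rw_len[OF ra] by simp
      have "ndpf_eq N a b" by (rule IH[OF lt ra rb])
      then show ?thesis using ndpf_eq_app2 snoc w2 1 by simp
    next
      case 2 then show ?thesis using key[OF 2 r1 r2] snoc w2 by simp
    next
      case 3 then show ?thesis using ndpf_eq_sym[OF key[OF 3 r2 r1]] snoc w2 by simp
    qed
  qed
qed



lemma moveR:
  assumes "1 \<le> a" "a \<le> c"
  shows "c \<le> N \<longrightarrow> (\<forall>t. a < t \<and> t \<le> c \<longrightarrow> y t < y a) \<longrightarrow>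
    ninv N (y \<circ> word_perm [a..<c]) + (c - a) = ninv N y \<and>
    (\<forall>t. (y \<circ> word_perm [a..<c]) t = (if t = c then y a else if a \<le> t \<and> t < c then y (Suc t) else y t))"
  using assms(2)
proof (induction c rule: dec_induct)
  case base then show ?case by simp
next
  case (step c)
  show ?case
  proof (intro impI)
    assume cN: "Suc c \<le> N" and h: "\<forall>t. a < t \<and> t \<le> Suc c \<longrightarrow> y t < y a"
    let ?Y = "y \<circ> word_perm [a..<c]"
    have h2: "\<forall>t. a < t \<and> t \<le> c \<longrightarrow> y t < y a" using h by auto
    have IHc: "ninv N ?Y + (c - a) = ninv N y \<and>
      (\<forall>t. ?Y t = (if t = c then y a else if a \<le> t \<and> t < c then y (Suc t) else y t))"
      by (rule mp[OF mp[OF step.IH Suc_leD[OF cN]] h2])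
    note IH = conjunct1[OF IHc] and Yv = conjunct2[OF IHc]
    have d: "?Y (Suc c) < ?Y c"
    proof -
      have e1: "?Y (Suc c) = y (Suc c)" using Yv by simp
      have e2: "?Y c = y a" using Yv by simp
      have "y (Suc c) < y a" using h step.hyps by simp
      then show ?thesis using e1 e2 by simp
    qed
    have n: "Suc (ninv N (?Y \<circ> simple_transp c)) = ninv N ?Y"
      by (rule ninv_down[OF _ _ d]) (use assms step cN in auto)
    have eq: "y \<circ> word_perm [a..<Suc c] = ?Y \<circ> simple_transp c"
      using step.hyps by (simp add: comp_assoc)
    show "ninv N (y \<circ> word_perm [a..<Suc c]) + (Suc c - a) = ninv N y \<and>
      (\<forall>t. (y \<circ> word_perm [a..<Suc c]) t =
        (if t = Suc c then y a else if a \<le> t \<and> t < Suc c then y (Suc t) else y t))"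
    proof
      show "ninv N (y \<circ> word_perm [a..<Suc c]) + (Suc c - a) = ninv N y"
        unfolding eq using IH n step.hyps by arith
      show "\<forall>t. (y \<circ> word_perm [a..<Suc c]) t =
        (if t = Suc c then y a else if a \<le> t \<and> t < Suc c then y (Suc t) else y t)"
        unfolding eq
      proof
        fix t
        have Yt: "\<And>u. ?Y u = (if u = c then y a else if a \<le> u \<and> u < c then y (Suc u) else y u)"
          using Yv by blast
        consider (a) "t = Suc c" | (b) "t = c" | (c) "a \<le> t \<and> t < c" | (d) "t \<noteq> Suc c \<and> t \<noteq> c \<and> \<not> (a \<le> t \<and> t < c)"
          by blast
        then show "(?Y \<circ> simple_transp c) t =
          (if t = Suc c then y a else if a \<le> t \<and> t < Suc c then y (Suc t) else y t)"
        proof cases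
          case a then show ?thesis using Yt[of c] by (simp add: st_apply)
        next
          case b then show ?thesis using Yt[of "Suc c"] step.hyps by (simp add: st_apply)
        next
          case c then show ?thesis using Yt[of t] by (simp add: st_apply)
        next
          case d then show ?thesis using Yt[of t] by (auto simp: st_apply)
        qed
      qed
    qed
  qed
qed

lemma moveL:
  assumes "1 \<le> a" "a \<le> c"
  shows "c \<le> N \<longrightarrow> (\<forall>t. a \<le> t \<and> t < c \<longrightarrow> y c < y t) \<longrightarrow>
    ninv N (y \<circ> word_perm (rev [a..<c])) + (c - a) = ninv N y \<and>
    (\<forall>t. (y \<circ> word_perm (rev [a..<c])) t = (if t = a then y c else if a < t \<and> t \<le> c then y (t - 1) else y t))"
  using assms(2)
proof (induction c arbitrary: y rule: dec_induct)
  case base then show ?case by simp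
next
  case (step c)
  show ?case
  proof (intro impI)
    assume cN: "Suc c \<le> N" and h: "\<forall>t. a \<le> t \<and> t < Suc c \<longrightarrow> y (Suc c) < y t"
    let ?y = "y \<circ> simple_transp c"
    have h': "\<forall>t. a \<le> t \<and> t < c \<longrightarrow> ?y c < ?y t" using h by (auto simp: st_apply)
    have IHc: "ninv N (?y \<circ> word_perm (rev [a..<c])) + (c - a) = ninv N ?y \<and>
      (\<forall>t. (?y \<circ> word_perm (rev [a..<c])) t = (if t = a then ?y c else if a < t \<and> t \<le> c then ?y (t - 1) else ?y t))"
      by (rule mp[OF mp[OF step.IH[of ?y] Suc_leD[OF cN]] h'])
    note IH = conjunct1[OF IHc] and Yv = conjunct2[OF IHc]
    have d: "y (Suc c) < y c" using h step.hyps by simp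
    have n: "Suc (ninv N ?y) = ninv N y"
      by (rule ninv_down[OF _ _ d]) (use assms step cN in auto)
    have eq: "y \<circ> word_perm (rev [a..<Suc c]) = ?y \<circ> word_perm (rev [a..<c])"
      using step.hyps by (simp add: comp_assoc)
    show "ninv N (y \<circ> word_perm (rev [a..<Suc c])) + (Suc c - a) = ninv N y \<and>
      (\<forall>t. (y \<circ> word_perm (rev [a..<Suc c])) t =
        (if t = a then y (Suc c) else if a < t \<and> t \<le> Suc c then y (t - 1) else y t))"
    proof
      show "ninv N (y \<circ> word_perm (rev [a..<Suc c])) + (Suc c - a) = ninv N y"
        unfolding eq using IH n step.hyps by arith
      show "\<forall>t. (y \<circ> word_perm (rev [a..<Suc c])) t =
        (if t = a then y (Suc c) else if a < t \<and> t \<le> Suc c then y (t - 1) else y t)"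
        unfolding eq
      proof
        fix t
        have Yt: "(?y \<circ> word_perm (rev [a..<c])) t = (if t = a then ?y c else if a < t \<and> t \<le> c then ?y (t - 1) else ?y t)"
          using Yv by blast
        consider (a) "t = a" | (b) "a < t \<and> t \<le> c" | (c) "t = Suc c" | (d) "t \<noteq> a \<and> \<not> (a < t \<and> t \<le> c) \<and> t \<noteq> Suc c"
          by blast
        then show "(?y \<circ> word_perm (rev [a..<c])) t =
          (if t = a then y (Suc c) else if a < t \<and> t \<le> Suc c then y (t - 1) else y t)"
        proof cases
          case a then show ?thesis using Yt by (simp add: st_apply)
        next
          case b
          then have "t - 1 \<noteq> c" "t - 1 \<noteq> Suc c" by auto
          then have "?y (t - 1) = y (t - 1)" by (simp add: st_apply)
          then show ?thesis using Yt b by simp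
        next
          case c
          then have "t \<noteq> a" using step.hyps by simp
          then show ?thesis using Yt c step.hyps by (simp add: st_apply)
        next
          case d
          then have "t \<noteq> c" using step.hyps by auto
          then have "?y t = y t" using d by (simp add: st_apply)
          then show ?thesis using Yt d by auto
        qed
      qed
    qed
  qed
qed

lemma comm_move:
  "(\<forall>j\<in>set M. i + 2 \<le> j \<and> j \<le> N - 1) \<Longrightarrow> 1 \<le> i \<Longrightarrow> ndpf_eq N (M @ [i]) (i # M)"
proof (induction M)
  case Nil then show ?case by (simp add: ndpf_eq_refl)
next
  case (Cons m M)
  have "ndpf_eq N ([m] @ (M @ [i]) @ []) ([m] @ (i # M) @ [])"
    by (rule ndpf_eq_ctx) (use Cons in auto)
  also have "ndpf_eq N ([m] @ (i # M) @ []) ([] @ [m, i] @ M)" by (simp add: ndpf_eq_refl)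
  also have "ndpf_eq N ([] @ [m, i] @ M) ([] @ [i, m] @ M)"
    by (rule ndpf_eq_rel[OF ndpf_rel.comm]) (use Cons.prems in auto)
  finally show ?case by simp
qed



theorem mainTheorem12:
  fixes N p q r :: nat and x :: "nat \<Rightarrow> nat"
  assumes "x permutes {1..N}"
    and "min_231 N x p q r"
  shows "phi_pi_eq N (x \<circ> Transposition.transpose p q) x
       \<and> left_min_321 N (x \<circ> Transposition.transpose p q) p q r"
proof -
  have xp: "x permutes {1..N}" using assms(1) .
  from assms(2) have m: "is_231 N x p q r"
    and mn: "\<forall>p' q' r'. is_231 N x p' q' r' \<longrightarrow>
        r - p < r' - p' \<or> (r - p = r' - p' \<and> q - p \<le> q' - p')"
    by (simp_all add: min_231_def)
  then have pqr: "1 \<le> p" "p < q" "q < r" "r \<le> N" "x r < x p" "x p < x q"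
    by (simp_all add: is_231_def)
  have inj: "inj x" using permutes_inj[OF xp] .
  have injne: "\<And>a b. a \<noteq> b \<Longrightarrow> x a \<noteq> x b" using inj by (meson injD)
  have small: "x t < x r" if "p < t" "t < q" for t
  proof (rule ccontr)
    assume "\<not> x t < x r"
    moreover have "x t \<noteq> x r" using that pqr by (intro injne) simp
    ultimately have tr: "x r < x t" by simp
    have "x t \<noteq> x q" using that by (intro injne) simp
    then consider "x t < x q" | "x q < x t" by linarith
    then show False
    proof cases
      case 1 then have "is_231 N x t q r" using tr that pqr by (simp add: is_231_def)
      from mn[rule_format, OF this] show False using that pqr by auto
    next
      case 2 then have "is_231 N x p t r" using tr that pqr by (simp add: is_231_def)
      from mn[rule_format, OF this] show False using that pqr by auto
    qed
  qed
  have big: "x p < x s" if "q < s" "s < r" for s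
  proof (rule ccontr)
    assume "\<not> x p < x s"
    moreover have "x s \<noteq> x p" using that pqr by (intro injne) simp
    ultimately have "x s < x p" by simp
    then have "is_231 N x p q s" using that pqr by (simp add: is_231_def)
    from mn[rule_format, OF this] show False using that pqr by auto
  qed
  define x' where "x' = x \<circ> Transposition.transpose p q"
  have x'v: "x' t = (if t = p then x q else if t = q then x p else x t)" for t
    by (simp add: x'_def Transposition.transpose_def)
  have part2: "left_min_321 N x' p q r"
    unfolding left_min_321_def using pqr small big by (auto simp: x'v)
  have x'p: "x' permutes {1..N}" unfolding x'_def
    by (rule permutes_compose[OF permutes_swap_id xp]) (use pqr in auto)

  define L where "L = [p..<q-1]"
  define R where "R = [q+1..<r]"
  have vL: "valid_word N L" "valid_word N (rev L)" using pqr by (auto simp: L_def valid_word_def)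
  have vR: "valid_word N R" "valid_word N (rev R)" using pqr by (auto simp: R_def valid_word_def)
  define z where "z = x \<circ> word_perm L"
  have qN: "q - 1 \<le> N" using pqr by simp
  have hx: "\<forall>t. p < t \<and> t \<le> q - 1 \<longrightarrow> x t < x p"
  proof (intro allI impI)
    fix t assume t: "p < t \<and> t \<le> q - 1"
    then have "x t < x r" using small by auto
    then show "x t < x p" using pqr by linarith
  qed
  have mr: "q - 1 \<le> N \<longrightarrow> (\<forall>t. p < t \<and> t \<le> q - 1 \<longrightarrow> x t < x p) \<longrightarrow>
    ninv N (x \<circ> word_perm [p..<q - 1]) + (q - 1 - p) = ninv N x \<and>
    (\<forall>t. (x \<circ> word_perm [p..<q - 1]) t = (if t = q - 1 then x p else if p \<le> t \<and> t < q - 1 then x (Suc t) else x t))"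
    by (rule moveR) (use pqr in auto)
  have "ninv N z + (q - 1 - p) = ninv N x \<and>
      (\<forall>t. z t = (if t = q - 1 then x p else if p \<le> t \<and> t < q - 1 then x (Suc t) else x t))"
    unfolding z_def L_def by (rule mp[OF mp[OF mr qN] hx])
  then have nz: "ninv N z + (q - 1 - p) = ninv N x"
    and zv: "\<And>t. z t = (if t = q - 1 then x p else if p \<le> t \<and> t < q - 1 then x (Suc t) else x t)"
    by auto
  have zp: "z permutes {1..N}" unfolding z_def by (rule permutes_compose[OF wp_permutes[OF vL(1)] xp])
  define v where "v = z \<circ> word_perm (rev R)"
  have hz: "\<forall>t. q + 1 \<le> t \<and> t < r \<longrightarrow> z r < z t"
  proof (intro allI impI)
    fix t assume t: "q + 1 \<le> t \<and> t < r"
    then have "x p < x t" using big by auto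
    then have "x r < x t" using pqr by linarith
    then show "z r < z t" using pqr t by (auto simp: zv)
  qed
  have ml: "r \<le> N \<longrightarrow> (\<forall>t. q + 1 \<le> t \<and> t < r \<longrightarrow> z r < z t) \<longrightarrow>
    ninv N (z \<circ> word_perm (rev [q + 1..<r])) + (r - (q + 1)) = ninv N z \<and>
    (\<forall>t. (z \<circ> word_perm (rev [q + 1..<r])) t = (if t = q + 1 then z r else if q + 1 < t \<and> t \<le> r then z (t - 1) else z t))"
    by (rule moveL) (use pqr in auto)
  have "ninv N v + (r - (q + 1)) = ninv N z \<and>
      (\<forall>t. v t = (if t = q + 1 then z r else if q + 1 < t \<and> t \<le> r then z (t - 1) else z t))"
    unfolding v_def R_def by (rule mp[OF mp[OF ml pqr(4)] hz])
  then have nv: "ninv N v + (r - (q + 1)) = ninv N z"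
    and vv: "\<And>t. v t = (if t = q + 1 then z r else if q + 1 < t \<and> t \<le> r then z (t - 1) else z t)"
    by auto
  have vp: "v permutes {1..N}" unfolding v_def by (rule permutes_compose[OF wp_permutes[OF vR(2)] zp])
  have vval: "v (q - 1) = x p" "v q = x q" "v (Suc q) = x r" using pqr by (auto simp: vv zv)
  define v1 where "v1 = v \<circ> simple_transp q"
  have n1: "Suc (ninv N v1) = ninv N v" unfolding v1_def
    by (rule ninv_down) (use pqr vval in auto)
  define B where "B = v1 \<circ> simple_transp (q - 1)"
  have dB: "v1 (Suc (q - 1)) < v1 (q - 1)"
    using pqr vval by (auto simp: v1_def st_apply)
  have nB: "Suc (ninv N B) = ninv N v1" unfolding B_def
    by (rule ninv_down[OF _ _ dB]) (use pqr in auto)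
  have v1p: "v1 permutes {1..N}" unfolding v1_def
    by (rule permutes_compose[OF st_permutes vp]) (use pqr in auto)
  have Bp: "B permutes {1..N}" unfolding B_def
    by (rule permutes_compose[OF st_permutes v1p]) (use pqr in auto)
  obtain c where c: "valid_word N c" "word_perm c = B" "length c = ninv N B"
    using exists_reduced[OF Bp] by blast
  define W where "W = c @ [q - 1, q] @ R @ rev L"
  define W' where "W' = c @ [q - 1, q] @ R @ [q - 1] @ rev L"
  have ex: "x = z \<circ> word_perm (rev L)"
    using wp_rev_inv_pt[of "rev L"] by (simp add: z_def fun_eq_iff)
  have ez: "z = v \<circ> word_perm R"
    using wp_rev_inv_pt[of R] by (simp add: v_def fun_eq_iff)
  have ev: "v = B \<circ> simple_transp (q - 1) \<circ> simple_transp q"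
    by (simp add: B_def v1_def fun_eq_iff)
  have xeq: "x = (((B \<circ> simple_transp (q - 1)) \<circ> simple_transp q) \<circ> word_perm R) \<circ> word_perm (rev L)"
    by (simp only: ex ez ev)
  have wpW: "word_perm W = x"
    unfolding xeq by (simp add: W_def c fun_eq_iff)
  have lenW: "length W = ninv N x"
    using c nB n1 nv nz pqr by (simp add: W_def L_def R_def)
  have vW: "valid_word N W" "valid_word N W'"
    using c vL vR pqr by (auto simp: W_def W'_def)
  have rwW: "rw N x W" using vW wpW lenW by (simp add: rw_def)

  define z' where "z' = x' \<circ> word_perm L"
  have h': "\<forall>t. p < t \<and> t \<le> q - 1 \<longrightarrow> x' t < x' p"
  proof (intro allI impI)
    fix t assume t: "p < t \<and> t \<le> q - 1"
    then have "x t < x r" using small by auto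
    then have "x t < x q" using pqr by linarith
    then show "x' t < x' p" using pqr t by (auto simp: x'v)
  qed
  have mr': "q - 1 \<le> N \<longrightarrow> (\<forall>t. p < t \<and> t \<le> q - 1 \<longrightarrow> x' t < x' p) \<longrightarrow>
    ninv N (x' \<circ> word_perm [p..<q - 1]) + (q - 1 - p) = ninv N x' \<and>
    (\<forall>t. (x' \<circ> word_perm [p..<q - 1]) t = (if t = q - 1 then x' p else if p \<le> t \<and> t < q - 1 then x' (Suc t) else x' t))"
    by (rule moveR) (use pqr in auto)
  have "ninv N z' + (q - 1 - p) = ninv N x' \<and>
      (\<forall>t. z' t = (if t = q - 1 then x' p else if p \<le> t \<and> t < q - 1 then x' (Suc t) else x' t))"
    unfolding z'_def L_def by (rule mp[OF mp[OF mr' qN] h'])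
  then have nz': "ninv N z' + (q - 1 - p) = ninv N x'"
    and z'v: "\<And>t. z' t = (if t = q - 1 then x' p else if p \<le> t \<and> t < q - 1 then x' (Suc t) else x' t)"
    by auto
  have zz: "z' = z \<circ> simple_transp (q - 1)"
  proof (rule ext)
    fix t
    have q1: "Suc (q - 1) = q" using pqr by simp
    have qq: "q \<noteq> q - Suc 0" "\<not> q < q - Suc 0" "q - Suc 0 < q" "(q - Suc 0 = q) = False" using pqr by auto
    consider (a) "t = q - 1" | (b) "t = q" | (c) "p \<le> t \<and> t < q - 1"
      | (d) "t \<noteq> q - 1 \<and> t \<noteq> q \<and> \<not> (p \<le> t \<and> t < q - 1)" by blast
    then show "z' t = (z \<circ> simple_transp (q - 1)) t"
    proof cases
      case a
      have "z' t = x q" using a pqr by (simp add: z'v x'v qq)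
      moreover have "(z \<circ> simple_transp (q - 1)) t = z q" using a q1 by (simp add: st_apply qq)
      moreover have "z q = x q"
      proof -
        have "q \<noteq> q - 1" "\<not> q < q - 1" using pqr by auto
        then show ?thesis by (simp add: zv qq)
      qed
      ultimately show ?thesis by simp
    next
      case b
      have "z' t = x p" using b pqr by (simp add: z'v x'v qq)
      moreover have "(z \<circ> simple_transp (q - 1)) t = z (q - 1)" using b q1 by (simp add: st_apply qq)
      moreover have "z (q - 1) = x p" by (simp add: zv qq)
      ultimately show ?thesis by simp
    next
      case c
      have sq: "Suc t \<noteq> q" "Suc t \<noteq> p" "t \<noteq> q - Suc 0" using c by auto
      have "z' t = x (Suc t)" using c pqr sq by (simp add: z'v x'v qq)
      moreover have "(z \<circ> simple_transp (q - 1)) t = z t" using c q1 by (simp add: st_apply qq)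
      moreover have "z t = x (Suc t)" using c by (simp add: zv qq)
      ultimately show ?thesis by simp
    next
      case d
      have tp: "t \<noteq> p" using d pqr by auto
      have "z' t = x t" using d tp by (auto simp: z'v x'v qq)
      moreover have "(z \<circ> simple_transp (q - 1)) t = z t" using d q1 by (auto simp: st_apply qq)
      moreover have "z t = x t" using d by (auto simp: zv)
      ultimately show ?thesis by simp
    qed
  qed
  have nzz: "ninv N (z \<circ> simple_transp (q - 1)) = Suc (ninv N z)"
    by (rule ninv_up) (use pqr in \<open>auto simp: zv\<close>)
  have ex': "x' = z' \<circ> word_perm (rev L)"
    using wp_rev_inv_pt[of "rev L"] by (simp add: z'_def fun_eq_iff)
  have x'eq: "x' = (((((B \<circ> simple_transp (q - 1)) \<circ> simple_transp q) \<circ> word_perm R) \<circ> simple_transp (q - 1)) \<circ> word_perm (rev L))"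
    by (simp only: ex' zz ez ev)
  have wpW': "word_perm W' = x'"
    unfolding x'eq by (simp add: W'_def c fun_eq_iff)
  have lenW': "length W' = ninv N x'"
    using c nB n1 nv nz nz' nzz zz pqr by (simp add: W'_def L_def R_def)
  have rwW': "rw N x' W'" using vW wpW' lenW' by (simp add: rw_def)

  have "ndpf_eq N ((c @ [q - 1, q]) @ (R @ [q - 1]) @ rev L) ((c @ [q - 1, q]) @ ((q - 1) # R) @ rev L)"
    by (rule ndpf_eq_ctx, rule comm_move) (use pqr in \<open>auto simp: R_def\<close>)
  also have "ndpf_eq N ((c @ [q - 1, q]) @ ((q - 1) # R) @ rev L) (c @ [q - 1, Suc (q - 1), q - 1] @ (R @ rev L))"
    using pqr by (simp add: ndpf_eq_refl)
  also have "ndpf_eq N (c @ [q - 1, Suc (q - 1), q - 1] @ (R @ rev L)) (c @ [q - 1, Suc (q - 1)] @ (R @ rev L))"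
    by (rule ndpf_eq_rel[OF ndpf_rel.ndpf]) (use pqr in auto)
  finally have eWW: "ndpf_eq N W' W" using pqr by (simp add: W_def W'_def)

  have part1: "phi_pi_eq N x' x"
    unfolding phi_pi_eq_def
  proof (intro allI impI, elim conjE)
    fix w w' assume h1: "reduced_word N x' w" and h2: "reduced_word N x w'"
    have r1: "rw N x' w" using h1 reduced_iff[OF x'p] by blast
    have r2: "rw N x w'" using h2 reduced_iff[OF xp] by blast
    have "ndpf_eq N w W'" by (rule matsumoto[OF r1 rwW'])
    also note eWW
    also have "ndpf_eq N W w'" by (rule matsumoto[OF rwW r2])
    finally show "ndpf_eq N w w'" .
  qed
  show ?thesis using part1 part2 unfolding x'_def by simp
qed


end
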